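(* Let $\alpha\in[0,1)$, $\beta>0$, and $h(p)=g_\alpha(1-e^{-\beta p})$ for $p\in[0,1]$. (i) (Extinction) If $(1-\alpha)\beta\le1$, then $\lim_{k\to\infty}h^k(p)=0$ for all $p\in[0,1]$. (ii) (Survival) If $(1-\alpha)\beta>1$, then $\liminf_{k\to\infty}h^k(p)>0$ for all $p\in(0,1)$.
   Context: For $\alpha\in(0,1)$ let $g_\alpha(x)=\frac{(1-\sqrt{1-4(1-\alpha)x(1-x)})^3}{8(1-\alpha)^2x^2}$ for $x\in(0,1]$ and $g_\alpha(0)=0$; let $g_0(x)=x$ for $x\le1/2$ and $g_0(x)=(1-x)^3/x^2$ for $x>1/2$. $h^k$ denotes the $k$-th iterate of $h$. *)

theory Defs
  imports "HOL-Analysis.Analysis"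
begin

definition g :: "real \<Rightarrow> real \<Rightarrow> real" where
  "g \<alpha> x =
     (if \<alpha> = 0 then (if x \<le> 1/2 then x else (1 - x)^3 / x^2)
      else if x = 0 then 0
      else (1 - sqrt (1 - 4 * (1 - \<alpha>) * x * (1 - x)))^3 / (8 * (1 - \<alpha>)^2 * x^2))"

definition h :: "real \<Rightarrow> real \<Rightarrow> real \<Rightarrow> real" where
  "h \<alpha> \<beta> p = g \<alpha> (1 - exp (- \<beta> * p))"

end

theory Submission
  imports Defs
begin

lemma g_bounds:
  assumes a0: "0 \<le> \<alpha>" and a1: "\<alpha> < 1" and x0: "0 \<le> x" and x1: "x \<le> 1"
  shows "0 \<le> g \<alpha> x \<and> g \<alpha> x \<le> (1-\<alpha>)*x \<and> (1-\<alpha>)*x*(1-x)^3 \<le> g \<alpha> x"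
proof (cases "\<alpha> = 0")
  case True
  show ?thesis
  proof (cases "x \<le> 1/2")
    case True
    have "x*(1-x)^3 \<le> x*1" using x0 x1 by (intro mult_left_mono) (auto simp: power_le_one)
    then show ?thesis using True \<open>\<alpha>=0\<close> x0 by (simp add: g_def)
  next
    case False
    hence xp: "x > 0" by simp
    have "(1-x)^3 \<le> x^3" using False x1 by (intro power_mono) auto
    hence "(1-x)^3 / x^2 \<le> x" using xp by (simp add: divide_simps power3_eq_cube power2_eq_square)
    moreover have "x*(1-x)^3 \<le> (1-x)^3 / x^2"
    proof -
      have "x^3 * (1-x)^3 \<le> 1 * (1-x)^3" using x0 x1 by (intro mult_right_mono) (auto simp: power_le_one)
      thus ?thesis using xp by (simp add: divide_simps power3_eq_cube power2_eq_square mult_ac)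
    qed
    ultimately show ?thesis using False \<open>\<alpha>=0\<close> x1 by (simp add: g_def)
  qed
next
  case False
  show ?thesis
  proof (cases "x = 0")
    case True then show ?thesis using False by (simp add: g_def)
  next
    case xn: False
    hence xp: "x > 0" using x0 by simp
    define c where "c = 1 - \<alpha>"
    have c0: "0 < c" and c1: "c \<le> 1" using a0 a1 by (auto simp: c_def)
    define D where "D = 1 - 4*c*x*(1-x)"
    have "0 \<le> (2*x-1)^2" by simp
    hence "x*(1-x) \<le> 1/4" by (simp add: power2_eq_square algebra_simps)
    moreover have "c*(x*(1-x)) \<le> 1*(x*(1-x))" using c1 x0 x1 by (intro mult_right_mono) auto
    ultimately have "c*(x*(1-x)) \<le> 1/4" by linarith
    hence D0: "D \<ge> 0" unfolding D_def by (simp add: algebra_simps)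
    define s where "s = sqrt D"
    have s0: "s \<ge> 0" and ss: "s^2 = D" using D0 by (auto simp: s_def)
    have gd: "g \<alpha> x = (1-s)^3 / (8*c^2*x^2)"
      using False xn by (simp add: g_def s_def D_def c_def mult_ac)
    have up: "1 - 2*c*x \<le> s"
    proof (cases "1 - 2*c*x \<le> 0")
      case True then show ?thesis using s0 by linarith
    next
      case False
      have "(1-2*c*x)^2 \<le> s^2" unfolding ss D_def
        using c0 c1 xp by (simp add: power2_eq_square algebra_simps mult_left_mono)
      then show ?thesis using s0 False by (simp add: power2_le_iff_abs_le)
    qed
    have lo: "s \<le> 1 - 2*c*x*(1-x)"
    proof -
      have "0 \<le> 4*(c*x*(1-x))^2" by simp
      hence "s^2 \<le> (1 - 2*c*x*(1-x))^2" unfolding ss D_def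
        by (simp add: power2_eq_square algebra_simps)
      moreover have "1 - 2*c*x*(1-x) \<ge> 0" using \<open>c*(x*(1-x)) \<le> 1/4\<close> by (simp add: algebra_simps)
      ultimately show ?thesis by (simp add: power2_le_iff_abs_le)
    qed
    have t0: "0 \<le> 2*c*x*(1-x)" using c0 xp x1 by simp
    have den: "8*c^2*x^2 > 0" using c0 xp by simp
    have "(1-s)^3 \<le> (2*c*x)^3" using up lo t0 by (intro power_mono) auto
    hence U: "g \<alpha> x \<le> c*x" unfolding gd using den
      by (simp add: divide_simps power3_eq_cube power2_eq_square mult_ac)
    have "(2*c*x*(1-x))^3 \<le> (1-s)^3" using lo t0 by (intro power_mono) auto
    moreover have "(2*c*x*(1-x))^3 = (c*x*(1-x)^3) * (8*c^2*x^2)"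
      by (simp add: algebra_simps power3_eq_cube power2_eq_square)
    ultimately have L: "c*x*(1-x)^3 \<le> g \<alpha> x" unfolding gd using den
      by (simp add: pos_le_divide_eq)
    have "0 \<le> c*x*(1-x)^3" using c0 xp x1 by simp
    then show ?thesis using U L by (simp add: c_def)
  qed
qed
lemma exp_strict: assumes "y > 0" shows "1 - y < exp (- y::real)"
proof (cases "y \<le> 2")
  case True
  have "1 - y/2 \<le> exp (-(y/2))" using exp_ge_add_one_self[of "-(y/2)"] by simp
  hence "(1 - y/2)^2 \<le> exp (-(y/2))^2" using True by (intro power_mono) auto
  also have "exp (-(y/2))^2 = exp (-y)" by (simp add: power2_eq_square flip: exp_add)
  finally have "(1-y/2)^2 \<le> exp(-y)" .
  moreover have "1 - y < (1-y/2)^2" using assms by (simp add: power2_eq_square algebra_simps)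
  ultimately show ?thesis by linarith
next
  case False then show ?thesis using exp_gt_zero[of "-y"] by linarith
qed

lemma h_bounds:
  assumes a0: "0 \<le> \<alpha>" and a1: "\<alpha> < 1" and b: "\<beta> > 0" and p0: "0 \<le> p"
  shows "0 \<le> h \<alpha> \<beta> p \<and> h \<alpha> \<beta> p \<le> (1-\<alpha>)*(1 - exp(-\<beta>*p))
      \<and> (1-\<alpha>)*(1 - exp(-\<beta>*p))*exp(-\<beta>*p)^3 \<le> h \<alpha> \<beta> p"
proof -
  have "exp(-\<beta>*p) \<le> 1" using b p0 by simp
  moreover have "exp(-\<beta>*p) > 0" by simp
  ultimately show ?thesis using g_bounds[OF a0 a1, of "1 - exp(-\<beta>*p)"] by (simp add: h_def)
qed
lemma part1:
  assumes a0: "0 \<le> \<alpha>" and a1: "\<alpha> < 1" and b: "\<beta> > 0" and cb: "(1 - \<alpha>) * \<beta> \<le> 1"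
    and p0: "0 \<le> p"
  shows "(\<lambda>k. (h \<alpha> \<beta> ^^ k) p) \<longlonglongrightarrow> 0"
proof -
  define c where "c = 1 - \<alpha>"
  have c0: "c > 0" using a1 by (simp add: c_def)
  define f where "f q = c * (1 - exp(-\<beta>*q))" for q
  define X where "X k = (h \<alpha> \<beta> ^^ k) p" for k
  have fle: "f q \<le> q" if "q \<ge> 0" for q
  proof -
    have "1 - exp(-\<beta>*q) \<le> \<beta>*q" using exp_ge_add_one_self[of "-\<beta>*q"] by simp
    hence "c*(1 - exp(-\<beta>*q)) \<le> c*(\<beta>*q)" using c0 by simp
    also have "\<dots> = (c*\<beta>)*q" by simp
    also have "\<dots> \<le> 1*q" using cb that unfolding c_def by (intro mult_right_mono) auto
    finally show ?thesis by (simp add: f_def)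
  qed
  have flt: "f q < q" if "q > 0" for q
  proof -
    have "1 - exp(-\<beta>*q) < \<beta>*q" using exp_strict[of "\<beta>*q"] b that by simp
    hence "c*(1 - exp(-\<beta>*q)) < c*(\<beta>*q)" using c0 by simp
    also have "\<dots> = (c*\<beta>)*q" by simp
    also have "\<dots> \<le> 1*q" using cb that unfolding c_def by (intro mult_right_mono) auto
    finally show ?thesis by (simp add: f_def)
  qed
  have step: "X (Suc k) = h \<alpha> \<beta> (X k)" for k by (simp add: X_def)
  have X0: "X k \<ge> 0" for k
  proof (induction k)
    case 0 then show ?case using p0 by (simp add: X_def)
  next
    case (Suc k) then show ?case using h_bounds[OF a0 a1 b Suc] step by simp
  qed
  have Xf: "X (Suc k) \<le> f (X k)" for k
    using h_bounds[OF a0 a1 b X0[of k]] step by (simp add: f_def c_def)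
  have dec: "decseq X" unfolding decseq_Suc_iff
  proof
    fix k show "X (Suc k) \<le> X k" using Xf[of k] fle[OF X0[of k]] by linarith
  qed
  obtain L where L: "X \<longlonglongrightarrow> L" "\<forall>i. L \<le> X i" using decseq_convergent[OF dec, of 0] X0 by blast
  have L0: "L \<ge> 0" using L(1) X0 by (intro LIMSEQ_le_const) auto
  have "(\<lambda>k. f (X k)) \<longlonglongrightarrow> f L" unfolding f_def by (intro tendsto_intros L(1))
  moreover have "(\<lambda>k. X (Suc k)) \<longlonglongrightarrow> L" using L(1) by (rule LIMSEQ_Suc)
  ultimately have "L \<le> f L" using Xf by (intro LIMSEQ_le) auto
  have "L = 0"
  proof (rule ccontr)
    assume "L \<noteq> 0"
    hence "L > 0" using L0 by simp
    hence "f L < L" by (rule flt)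
    thus False using \<open>L \<le> f L\<close> by linarith
  qed
  moreover have "X = (\<lambda>k. (h \<alpha> \<beta> ^^ k) p)" by (simp add: X_def fun_eq_iff)
  ultimately show ?thesis using L(1) by simp
qed
lemma part2:
  assumes a0: "0 \<le> \<alpha>" and a1: "\<alpha> < 1" and b: "\<beta> > 0" and cb: "(1 - \<alpha>) * \<beta> > 1"
    and p0: "0 < p" and p1: "p < 1"
  shows "liminf (\<lambda>k. ereal ((h \<alpha> \<beta> ^^ k) p)) > 0"
proof -
  define c where "c = 1 - \<alpha>"
  have c0: "c > 0" using a1 by (simp add: c_def)
  define \<phi> where "\<phi> q = c*(exp(-3*\<beta>*q) - exp(-4*\<beta>*q)) - q" for q
  have "(\<phi> has_real_derivative c*(-3*\<beta> + 4*\<beta>) - 1) (at 0)"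
    unfolding \<phi>_def by (rule derivative_eq_intros refl | simp)+
  moreover have "c*(-3*\<beta> + 4*\<beta>) - 1 > 0" using cb by (simp add: c_def)
  ultimately obtain d where d: "d > 0" "\<And>t. t > 0 \<Longrightarrow> t < d \<Longrightarrow> \<phi> 0 < \<phi> (0 + t)"
    using DERIV_pos_inc_right by blast
  have lform: "(1-\<alpha>)*(1 - exp(-\<beta>*q))*exp(-\<beta>*q)^3 = \<phi> q + q" for q
  proof -
    have "exp(-\<beta>*q)^3 = exp(-3*\<beta>*q)" by (simp add: exp_of_nat_mult[symmetric] mult_ac)
    moreover have "exp(-\<beta>*q)^4 = exp(-4*\<beta>*q)" by (simp add: exp_of_nat_mult[symmetric] mult_ac)
    ultimately show ?thesis unfolding \<phi>_def c_def by (simp add: algebra_simps power_Suc2 [of _ 3, simplified])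
  qed
  define \<delta> where "\<delta> = c*(1 - exp(-\<beta>*d))*exp(-\<beta>)^3"
  have \<delta>0: "\<delta> > 0" unfolding \<delta>_def using c0 b d by simp
  have key: "min q \<delta> \<le> h \<alpha> \<beta> q \<and> h \<alpha> \<beta> q < 1" if q0: "0 < q" and q1: "q < 1" for q
  proof -
    note hb = h_bounds[OF a0 a1 b, of q]
    have "h \<alpha> \<beta> q \<le> c*(1 - exp(-\<beta>*q))" using hb q0 by (simp add: c_def)
    also have "\<dots> \<le> 1 * (1 - exp(-\<beta>*q))" using c0 a0 q0 b by (intro mult_right_mono) (auto simp: c_def)
    also have "\<dots> < 1" by simp
    finally have lt1: "h \<alpha> \<beta> q < 1" .
    show ?thesis
    proof (cases "q < d")
      case True
      have "\<phi> 0 < \<phi> q" using d(2)[OF q0 True] by simp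
      hence "q < \<phi> q + q" by (simp add: \<phi>_def)
      hence "q \<le> h \<alpha> \<beta> q" using hb q0 lform[of q] by simp
      thus ?thesis using lt1 by (simp add: min_le_iff_disj)
    next
      case False
      have e1: "exp(-\<beta>*q) \<le> exp(-\<beta>*d)" using False b by simp
      have e2: "exp(-\<beta>) ^3 \<le> exp(-\<beta>*q)^3" using q1 b by (intro power_mono) auto
      have e3: "c*(1 - exp(-\<beta>*d)) \<le> c*(1 - exp(-\<beta>*q))"
        using e1 c0 by (intro mult_left_mono) auto
      have e4: "0 \<le> c*(1 - exp(-\<beta>*q))" using c0 q0 b by simp
      have "\<delta> \<le> c*(1 - exp(-\<beta>*q))*exp(-\<beta>*q)^3" unfolding \<delta>_def
        by (rule mult_mono[OF e3 e2 e4]) simp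
      hence "\<delta> \<le> h \<alpha> \<beta> q" using hb[OF less_imp_le[OF q0]] unfolding c_def by linarith
      thus ?thesis using lt1 by (simp add: min_le_iff_disj)
    qed
  qed
  define m where "m = min p \<delta>"
  have m0: "m > 0" using p0 \<delta>0 by (simp add: m_def)
  have inv: "0 < (h \<alpha> \<beta> ^^ k) p \<and> (h \<alpha> \<beta> ^^ k) p < 1 \<and> m \<le> (h \<alpha> \<beta> ^^ k) p" for k
  proof (induction k)
    case 0 then show ?case using p0 p1 by (simp add: m_def)
  next
    case (Suc k)
    then have "min ((h \<alpha> \<beta> ^^ k) p) \<delta> \<le> (h \<alpha> \<beta> ^^ Suc k) p \<and> (h \<alpha> \<beta> ^^ Suc k) p < 1"
      using key by simp
    then show ?case using Suc m0 by (auto simp: m_def)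
  qed
  have "ereal m \<le> liminf (\<lambda>k. ereal ((h \<alpha> \<beta> ^^ k) p))"
    using inv by (intro Liminf_bounded) (auto intro: always_eventually)
  then show ?thesis using m0 by (metis ereal_less(2) order_less_le_trans)
qed

theorem mainTheorem7:
  fixes \<alpha> \<beta> :: real
  assumes "0 \<le> \<alpha>" and "\<alpha> < 1" and "\<beta> > 0"
  shows "((1 - \<alpha>) * \<beta> \<le> 1 \<longrightarrow>
            (\<forall>p\<in>{0..1}. (\<lambda>k. (h \<alpha> \<beta> ^^ k) p) \<longlonglongrightarrow> 0))
       \<and> ((1 - \<alpha>) * \<beta> > 1 \<longrightarrow>
            (\<forall>p\<in>{0<..<1}. liminf (\<lambda>k. ereal ((h \<alpha> \<beta> ^^ k) p)) > 0))"
  proof (intro conjI impI ballI)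
  fix p :: real assume "(1 - \<alpha>) * \<beta> \<le> 1" "p \<in> {0..1}"
  then show "(\<lambda>k. (h \<alpha> \<beta> ^^ k) p) \<longlonglongrightarrow> 0" using part1[OF assms] by simp
next
  fix p :: real assume "(1 - \<alpha>) * \<beta> > 1" "p \<in> {0<..<1}"
  then show "liminf (\<lambda>k. ereal ((h \<alpha> \<beta> ^^ k) p)) > 0" using part2[OF assms] by simp
qed

end
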